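(* Let $f$ be an adaptive submodular utility function (see context). Then for every partial realization $\psi$, the set function $g_\psi:2^{V\setminus\mathrm{dom}(\psi)}\to\mathbb{R}_{\ge0}$ defined by $g_\psi(S)=\mathbb{E}[f(\mathrm{dom}(\psi)\cup S,\Phi)\mid\Phi\succeq\psi]$ is submodular.
   Context: $V$ is a finite set of items; each item $e$ has a random state $\Phi(e)$ in a set $O$; a realization is a map $\phi:V\to O$ and the random realization $\Phi$ has a known prior $p(\phi)=\Pr[\Phi=\phi]$. A partial realization $\psi$ is a map from a subset $\mathrm{dom}(\psi)\subseteq V$ to $O$; $\phi\succeq\psi$ means $\phi$ agrees with $\psi$ on $\mathrm{dom}(\psi)$; $\psi\subseteq\psi'$ means $\mathrm{dom}(\psi)\subseteq\mathrm{dom}(\psi')$ and they agree on $\mathrm{dom}(\psi)$. The utility $f(S,\phi)\ge0$ is defined for $S\subseteq V$ and realizations $\phi$. The conditional expected marginal utility is $\Delta(e\mid\psi)=\mathbb{E}[f(\mathrm{dom}(\psi)\cup\{e\},\Phi)-f(\mathrm{dom}(\psi),\Phi)\mid\Phi\succeq\psi]$. $f$ is adaptive submodular if $\Delta(e\mid\psi)\ge\Delta(e\mid\psi')$ for all partial realizations $\psi\subseteq\psi'$ and all $e\in V\setminus\mathrm{dom}(\psi')$. Conditional expectations are taken over partial realizations with positive probability. *)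

theory Defs
  imports "HOL-Probability.Probability"
begin

text \<open>Items are the elements of a finite type 'v (so V = UNIV), states live in type 'o.
  A realization is a total function 'v \<Rightarrow> 'o, the prior is a discrete distribution
  P :: ('v \<Rightarrow> 'o) pmf, and a partial realization is a map 'v \<rightharpoonup> 'o.\<close>

definition consistent :: "('v \<Rightarrow> 'o) \<Rightarrow> ('v \<rightharpoonup> 'o) \<Rightarrow> bool" where
  "consistent \<phi> \<psi> \<longleftrightarrow> (\<forall>x\<in>dom \<psi>. \<psi> x = Some (\<phi> x))"

definition cons_event :: "('v \<rightharpoonup> 'o) \<Rightarrow> ('v \<Rightarrow> 'o) set" where
  "cons_event \<psi> = {\<phi>. consistent \<phi> \<psi>}"

text \<open>Conditional expectation E[X(\<Phi>) | \<Phi> consistent with \<psi>] (meaningful when the event has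
  positive probability).\<close>
definition cond_exp :: "('v \<Rightarrow> 'o) pmf \<Rightarrow> ('v \<rightharpoonup> 'o) \<Rightarrow> (('v \<Rightarrow> 'o) \<Rightarrow> real) \<Rightarrow> real" where
  "cond_exp P \<psi> X = measure_pmf.expectation (cond_pmf P (cons_event \<psi>)) X"

definition cond_marg :: "('v \<Rightarrow> 'o) pmf \<Rightarrow> ('v set \<Rightarrow> ('v \<Rightarrow> 'o) \<Rightarrow> real) \<Rightarrow> 'v \<Rightarrow> ('v \<rightharpoonup> 'o) \<Rightarrow> real" where
  "cond_marg P f e \<psi> = cond_exp P \<psi> (\<lambda>\<phi>. f (insert e (dom \<psi>)) \<phi> - f (dom \<psi>) \<phi>)"

definition adaptive_submodular :: "('v \<Rightarrow> 'o) pmf \<Rightarrow> ('v set \<Rightarrow> ('v \<Rightarrow> 'o) \<Rightarrow> real) \<Rightarrow> bool" where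
  "adaptive_submodular P f \<longleftrightarrow>
     (\<forall>\<psi> \<psi>' e. \<psi> \<subseteq>\<^sub>m \<psi>' \<longrightarrow> measure_pmf.prob P (cons_event \<psi>) > 0 \<longrightarrow>
        measure_pmf.prob P (cons_event \<psi>') > 0 \<longrightarrow> e \<notin> dom \<psi>' \<longrightarrow>
        cond_marg P f e \<psi> \<ge> cond_marg P f e \<psi>')"

definition submodular_on :: "'a set \<Rightarrow> ('a set \<Rightarrow> real) \<Rightarrow> bool" where
  "submodular_on D g \<longleftrightarrow>
     (\<forall>A B. A \<subseteq> D \<longrightarrow> B \<subseteq> D \<longrightarrow> g (A \<union> B) + g (A \<inter> B) \<le> g A + g B)"

end

theory Submission
  imports Defs
begin

lemma cond_cond_pmf:
  assumes ne: "set_pmf P \<inter> A \<inter> B \<noteq> {}"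
  shows "cond_pmf (cond_pmf P A) B = cond_pmf P (A \<inter> B)"
proof (rule pmf_eqI)
  fix x
  have neA: "set_pmf P \<inter> A \<noteq> {}" using ne by auto
  have ne2: "set_pmf (cond_pmf P A) \<inter> B \<noteq> {}" using ne neA by auto
  have mA: "measure (measure_pmf P) A \<noteq> 0" using neA by (simp add: measure_pmf_zero_iff)
  have mAB: "measure (measure_pmf P) (A \<inter> B) \<noteq> 0" using ne
    by (simp add: measure_pmf_zero_iff Int_assoc)
  have ne': "set_pmf P \<inter> (A \<inter> B) \<noteq> {}" using ne by blast
  have eA: "emeasure (measure_pmf P) A \<noteq> 0"
    using mA by (simp add: measure_pmf.emeasure_eq_measure)
  have meas: "measure (measure_pmf (cond_pmf P A)) B = measure (measure_pmf P) (A \<inter> B) / measure (measure_pmf P) A"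
    unfolding cond_pmf.rep_eq[OF neA]
    by (subst measure_uniform_measure) (use eA in \<open>auto simp: measure_pmf.emeasure_eq_measure\<close>)
  show "pmf (cond_pmf (cond_pmf P A) B) x = pmf (cond_pmf P (A \<inter> B)) x"
    using mA mAB by (simp add: pmf_cond[OF ne2] pmf_cond[OF neA] pmf_cond[OF ne'] meas)
qed

lemma tower_nn:
  fixes Q :: "'a pmf" and k :: "'a \<Rightarrow> 'b"
  shows "(\<integral>\<^sup>+x. h x \<partial>measure_pmf Q) = (\<integral>\<^sup>+y. (\<integral>\<^sup>+x. h x \<partial>measure_pmf (cond_pmf Q {x. k y = k x})) \<partial>measure_pmf Q)"
proof -
  have "bind_pmf Q (\<lambda>y. cond_pmf Q {x. k y = k x}) = Q"
    by (rule bind_cond_pmf_cancel) (auto simp: eq_commute)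
  then have "(\<integral>\<^sup>+x. h x \<partial>measure_pmf Q) = (\<integral>\<^sup>+x. h x \<partial>measure_pmf (bind_pmf Q (\<lambda>y. cond_pmf Q {x. k y = k x})))"
    by simp
  then show ?thesis by simp
qed

lemma integrable_cond_pmf:
  fixes g :: "'a \<Rightarrow> real"
  assumes int: "integrable (measure_pmf P) g" and ne: "set_pmf P \<inter> X \<noteq> {}"
  shows "integrable (measure_pmf (cond_pmf P X)) g"
proof -
  have eX: "emeasure (measure_pmf P) X \<noteq> 0"
    using ne by (simp add: measure_pmf.emeasure_eq_measure measure_pmf_zero_iff)
  have fin: "(\<integral>\<^sup>+x. norm (g x) \<partial>measure_pmf P) < \<infinity>" using int integrable_iff_bounded by blast
  have "(\<integral>\<^sup>+x. norm (g x) \<partial>measure_pmf (cond_pmf P X)) = (\<integral>\<^sup>+x. ennreal (norm (g x)) * indicator X x \<partial>measure_pmf P) / emeasure (measure_pmf P) X"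
    unfolding cond_pmf.rep_eq[OF ne] by (rule nn_integral_uniform_measure) auto
  also have "\<dots> \<le> (\<integral>\<^sup>+x. norm (g x) \<partial>measure_pmf P) / emeasure (measure_pmf P) X"
    by (intro divide_right_mono_ennreal nn_integral_mono) (auto simp: indicator_def)
  also have "\<dots> < \<infinity>"
    using fin eX by (simp add: divide_ennreal_def ennreal_mult_eq_top_iff flip: less_top)
  finally show ?thesis by (simp add: integrable_iff_bounded)
qed


lemma evext_aux:
  assumes "\<phi> \<in> cons_event \<psi>"
  shows "cons_event \<psi> \<inter> {x. (\<lambda>y. if y \<in> B then Some (\<phi> y) else None) = (\<lambda>y. if y \<in> B then Some (x y) else None)}
     = cons_event (\<lambda>y. if y \<in> B then Some (\<phi> y) else \<psi> y)"
proof -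
  have k: "((\<lambda>y. if y \<in> B then Some (\<phi> y) else None) = (\<lambda>y. if y \<in> B then Some (x y) else None))
     \<longleftrightarrow> (\<forall>y\<in>B. \<phi> y = x y)" for x
    by (auto simp: fun_eq_iff)
  have c: "consistent x (\<lambda>y. if y \<in> B then Some (\<phi> y) else \<psi> y) \<longleftrightarrow>
      (\<forall>y\<in>B. \<phi> y = x y) \<and> (\<forall>y\<in>dom \<psi> - B. \<psi> y = Some (x y))" for x
    unfolding consistent_def by (auto simp: dom_def)
  have cphi: "\<psi> y = Some (\<phi> y)" if "y \<in> dom \<psi>" for y
    using assms that by (simp add: cons_event_def consistent_def)
  have "consistent x \<psi> \<and> (\<forall>y\<in>B. \<phi> y = x y) \<longleftrightarrow> consistent x (\<lambda>y. if y \<in> B then Some (\<phi> y) else \<psi> y)" for x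
  proof
    assume "consistent x \<psi> \<and> (\<forall>y\<in>B. \<phi> y = x y)"
    then show "consistent x (\<lambda>y. if y \<in> B then Some (\<phi> y) else \<psi> y)"
      unfolding c consistent_def by blast
  next
    assume r: "consistent x (\<lambda>y. if y \<in> B then Some (\<phi> y) else \<psi> y)"
    then have r1: "\<forall>y\<in>B. \<phi> y = x y" and r2: "\<forall>y\<in>dom \<psi> - B. \<psi> y = Some (x y)"
      unfolding c by blast+
    have "\<psi> y = Some (x y)" if "y \<in> dom \<psi>" for y
    proof (cases "y \<in> B")
      case True then show ?thesis using cphi[OF that] r1 by simp
    next
      case False then show ?thesis using r2 that by blast
    qed
    then show "consistent x \<psi> \<and> (\<forall>y\<in>B. \<phi> y = x y)"
      using r1 unfolding consistent_def by blast
  qed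
  then show ?thesis
    unfolding cons_event_def k by blast
qed

theorem lemma2:
  fixes P :: "('v::finite \<Rightarrow> 'o) pmf"
    and f :: "'v set \<Rightarrow> ('v \<Rightarrow> 'o) \<Rightarrow> real"
    and \<psi> :: "'v \<rightharpoonup> 'o"
  assumes nonneg: "\<And>S \<phi>. f S \<phi> \<ge> 0"
    and integrable: "\<And>S. integrable (measure_pmf P) (f S)"
    and adasub: "adaptive_submodular P f"
    and pos: "measure_pmf.prob P (cons_event \<psi>) > 0"
  shows "submodular_on (UNIV - dom \<psi>) (\<lambda>S. cond_exp P \<psi> (f (dom \<psi> \<union> S)))"
proof -
  define D where "D = dom \<psi>"
  define Q where "Q = cond_pmf P (cons_event \<psi>)"
  define g where "g S = cond_exp P \<psi> (f (D \<union> S))" for S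
  define ext where "ext B \<phi> = (\<lambda>x. if x \<in> B then Some (\<phi> x) else \<psi> x)" for B and \<phi> :: "'v \<Rightarrow> 'o"
  define kk where "kk B y = (\<lambda>x. if x \<in> B then Some (y x) else None)" for B and y :: "'v \<Rightarrow> 'o"
  define CC where "CC B \<phi> = cond_pmf Q {x. kk B \<phi> = kk B x}" for B \<phi>
  define N where "N R S = (\<integral>\<^sup>+x. ennreal (f (D \<union> S) x) \<partial>measure_pmf R)" for R S
  have ne: "set_pmf P \<inter> cons_event \<psi> \<noteq> {}"
  proof
    assume "set_pmf P \<inter> cons_event \<psi> = {}"
    then have "measure_pmf.prob P (cons_event \<psi>) = 0" by (simp add: measure_pmf_zero_iff)
    with pos show False by simp
  qed
  have intQ: "integrable (measure_pmf Q) (f S)" for S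
    unfolding Q_def by (rule integrable_cond_pmf[OF integrable ne])
  have gQ: "g S = integral\<^sup>L (measure_pmf Q) (f (D \<union> S))" for S
    unfolding g_def cond_exp_def Q_def ..
  have Nint: "N R S = ennreal (integral\<^sup>L (measure_pmf R) (f (D \<union> S)))"
    if "integrable (measure_pmf R) (f (D \<union> S))" for R S
    unfolding N_def using that nonneg by (intro nn_integral_eq_integral) auto
  have NQ: "N Q S = ennreal (g S)" for S
    using Nint[OF intQ] gQ by simp
  have gnn: "g S \<ge> 0" for S
    unfolding gQ by (rule integral_nonneg_AE) (use nonneg in auto)
  have setQ: "\<phi> \<in> set_pmf P" "\<phi> \<in> cons_event \<psi>" if "\<phi> \<in> set_pmf Q" for \<phi>
    using that unfolding Q_def set_cond_pmf[OF ne] by auto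
  have evext: "cons_event \<psi> \<inter> {x. kk B \<phi> = kk B x} = cons_event (ext B \<phi>)"
    if "\<phi> \<in> cons_event \<psi>" for B \<phi>
    unfolding ext_def kk_def by (rule evext_aux[OF that])
  have inext: "\<phi> \<in> cons_event (ext B \<phi>)" if "\<phi> \<in> cons_event \<psi>" for B \<phi>
    using that unfolding cons_event_def consistent_def ext_def by (auto simp: dom_def)
  have CCeq: "CC B \<phi> = cond_pmf P (cons_event (ext B \<phi>))" if "\<phi> \<in> set_pmf Q" for B \<phi>
  proof -
    have "CC B \<phi> = cond_pmf P (cons_event \<psi> \<inter> {x. kk B \<phi> = kk B x})"
      unfolding CC_def Q_def
      by (rule cond_cond_pmf) (use setQ[OF that] in auto)
    then show ?thesis using evext setQ[OF that] by simp
  qed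
  have neext: "set_pmf P \<inter> cons_event (ext B \<phi>) \<noteq> {}" if "\<phi> \<in> set_pmf Q" for B \<phi>
    using setQ[OF that] inext by blast
  have intC: "integrable (measure_pmf (CC B \<phi>)) (f S)" if "\<phi> \<in> set_pmf Q" for B \<phi> S
    unfolding CCeq[OF that] by (rule integrable_cond_pmf[OF integrable neext[OF that]])
  have tower: "(\<integral>\<^sup>+\<phi>. N (CC B \<phi>) S \<partial>measure_pmf Q) = N Q S" for B S
    unfolding N_def CC_def by (rule tower_nn[symmetric])
  have dimret: "g (insert e B) + g A \<le> g (insert e A) + g B"
    if AB: "A \<subseteq> B" and eD: "e \<notin> D" and eB: "e \<notin> B" for A B e
  proof -
    have pw: "N (CC B \<phi>) (insert e B) + N (CC A \<phi>) A \<le> N (CC A \<phi>) (insert e A) + N (CC B \<phi>) B"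
      if phi: "\<phi> \<in> set_pmf Q" for \<phi>
    proof -
      have cphi: "\<forall>y\<in>dom \<psi>. \<psi> y = Some (\<phi> y)"
        using setQ(2)[OF phi] by (simp add: cons_event_def consistent_def)
      have le: "ext A \<phi> \<subseteq>\<^sub>m ext B \<phi>"
        using AB cphi unfolding map_le_def ext_def by (auto simp: dom_def split: if_splits)
      have posA: "measure_pmf.prob P (cons_event (ext A \<phi>)) > 0"
        using setQ[OF phi] inext by (intro measure_pmf_posI) auto
      have posB: "measure_pmf.prob P (cons_event (ext B \<phi>)) > 0"
        using setQ[OF phi] inext by (intro measure_pmf_posI) auto
      have domext: "dom (ext X \<phi>) = D \<union> X" for X
        unfolding ext_def D_def by (auto simp: dom_def)
      have "cond_marg P f e (ext B \<phi>) \<le> cond_marg P f e (ext A \<phi>)"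
        using adasub le posA posB eD eB domext unfolding adaptive_submodular_def by auto
      then have "integral\<^sup>L (measure_pmf (CC B \<phi>)) (\<lambda>x. f (insert e (D \<union> B)) x - f (D \<union> B) x)
          \<le> integral\<^sup>L (measure_pmf (CC A \<phi>)) (\<lambda>x. f (insert e (D \<union> A)) x - f (D \<union> A) x)"
        unfolding cond_marg_def cond_exp_def domext CCeq[OF phi] .
      then have r: "integral\<^sup>L (measure_pmf (CC B \<phi>)) (f (D \<union> insert e B)) - integral\<^sup>L (measure_pmf (CC B \<phi>)) (f (D \<union> B))
          \<le> integral\<^sup>L (measure_pmf (CC A \<phi>)) (f (D \<union> insert e A)) - integral\<^sup>L (measure_pmf (CC A \<phi>)) (f (D \<union> A))"
        by (simp add: integral_diff intC[OF phi])
      have nn: "integral\<^sup>L (measure_pmf R) (f S) \<ge> 0" for R S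
        by (rule integral_nonneg_AE) (use nonneg in auto)
      show ?thesis
        unfolding Nint[OF intC[OF phi]]
        using r nn by (simp add: ennreal_plus[symmetric] del: ennreal_plus)
    qed
    have "(\<integral>\<^sup>+\<phi>. N (CC B \<phi>) (insert e B) + N (CC A \<phi>) A \<partial>measure_pmf Q)
        \<le> (\<integral>\<^sup>+\<phi>. N (CC A \<phi>) (insert e A) + N (CC B \<phi>) B \<partial>measure_pmf Q)"
      by (rule nn_integral_mono_AE) (use pw in \<open>auto simp: AE_measure_pmf_iff\<close>)
    then have "N Q (insert e B) + N Q A \<le> N Q (insert e A) + N Q B"
      by (simp add: nn_integral_add tower)
    then show ?thesis
      using gnn by (simp add: NQ ennreal_plus[symmetric] del: ennreal_plus)
  qed
  have ind: "finite X \<Longrightarrow> X \<inter> B = {} \<Longrightarrow> X \<inter> D = {} \<Longrightarrow> C \<subseteq> B \<Longrightarrow>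
      g (B \<union> X) + g C \<le> g (C \<union> X) + g B" for X B C
  proof (induction X rule: finite_induct)
    case empty then show ?case by simp
  next
    case (insert x X)
    have "g (insert x (B \<union> X)) + g (C \<union> X) \<le> g (insert x (C \<union> X)) + g (B \<union> X)"
      using insert by (intro dimret) auto
    with insert show ?case by simp
  qed
  show ?thesis
    unfolding submodular_on_def
  proof (intro allI impI)
    fix A B assume A: "A \<subseteq> UNIV - dom \<psi>" and B: "B \<subseteq> UNIV - dom \<psi>"
    have "g (B \<union> (A - B)) + g (A \<inter> B) \<le> g ((A \<inter> B) \<union> (A - B)) + g B"
      using A by (intro ind) (auto simp: D_def)
    moreover have "B \<union> (A - B) = A \<union> B" "(A \<inter> B) \<union> (A - B) = A" by auto
    ultimately show "cond_exp P \<psi> (f (dom \<psi> \<union> (A \<union> B))) + cond_exp P \<psi> (f (dom \<psi> \<union> (A \<inter> B)))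
         \<le> cond_exp P \<psi> (f (dom \<psi> \<union> A)) + cond_exp P \<psi> (f (dom \<psi> \<union> B))"
      unfolding g_def D_def by simp
  qed
qed

end
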